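(* Let $(\varphi_n(x))_{n\in\mathbb{N}}$ be a symplectic basis. Then for every symplectic power series $\varphi(x)$ there exists a unique sequence $(a_n)_{n\in\mathbb{N}}$ of complex numbers such that for each $k\ge0$, $\varphi(x)-\sum_{i=0}^k a_i\varphi_i(x)\in\mathfrak m^{2k+2}$. Consequently $\varphi(x)=\sum_{i\ge0}a_i\varphi_i(x)$, the sum converging in the $\mathfrak m$-adic topology of $\mathbb{C}[[x]]$.
   Context: A formal power series $\varphi(x)=\sum_{i\ge0}\gamma_i x^i\in\mathbb{C}[[x]]$ is called symplectic if for every $m\ge1$ one has $\sum_{k=0}^{m-1}(-1)^k\binom{m-1}{k}\gamma_{m+k}=0$. Let $\mathfrak m=x\,\mathbb{C}[[x]]$ be the maximal ideal of $\mathbb{C}[[x]]$. A symplectic basis is a sequence $(\varphi_n(x))_{n\in\mathbb{N}}$ of symplectic power series such that each $\varphi_n(x)\in\mathfrak m^{2n}$ and its class in $\mathfrak m^{2n}/\mathfrak m^{2n+1}$ is nonzero. *)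

theory Defs
  imports "HOL-Computational_Algebra.Formal_Power_Series"
begin

definition symplectic :: "complex fps \<Rightarrow> bool" where
  "symplectic f \<longleftrightarrow>
     (\<forall>m::nat. m \<ge> 1 \<longrightarrow>
        (\<Sum>k=0..m-1. (-1)^k * of_nat ((m-1) choose k) * fps_nth f (m+k)) = 0)"

text \<open>Membership in the k-th power of the maximal ideal m = x C[[x]]:
  all coefficients below degree k vanish.\<close>
definition in_mpow :: "complex fps \<Rightarrow> nat \<Rightarrow> bool" where
  "in_mpow f k \<longleftrightarrow> (\<forall>i<k. fps_nth f i = 0)"

text \<open>Symplectic basis: each phi n symplectic, in m^(2n), with nonzero class
  in m^(2n)/m^(2n+1), i.e. nonzero coefficient of x^(2n).\<close>
definition symplectic_basis :: "(nat \<Rightarrow> complex fps) \<Rightarrow> bool" where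
  "symplectic_basis phi \<longleftrightarrow>
     (\<forall>n. symplectic (phi n) \<and> in_mpow (phi n) (2*n) \<and> fps_nth (phi n) (2*n) \<noteq> 0)"

end

theory Submission
  imports Defs
begin

lemma symp_lin:
  assumes "symplectic f" "symplectic g"
  shows "symplectic (f - fps_const c * g)"
  unfolding symplectic_def
proof (intro allI impI)
  fix m :: nat assume m: "m \<ge> 1"
  have "(\<Sum>k=0..m-1. (-1)^k * of_nat ((m-1) choose k) * fps_nth (f - fps_const c * g) (m+k))
     = (\<Sum>k=0..m-1. (-1)^k * of_nat ((m-1) choose k) * fps_nth f (m+k))
       - c * (\<Sum>k=0..m-1. (-1)^k * of_nat ((m-1) choose k) * fps_nth g (m+k))"
    by (simp add: algebra_simps sum_subtractf sum_distrib_left)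
  also have "\<dots> = 0" using assms m unfolding symplectic_def by simp
  finally show "(\<Sum>k=0..m-1. (-1)^k * of_nat ((m-1) choose k) * fps_nth (f - fps_const c * g) (m+k)) = 0" .
qed

lemma symp_odd:
  assumes "symplectic f" "in_mpow f (2*k+1)"
  shows "in_mpow f (2*k+2)"
proof -
  have "(\<Sum>j=0..k. (-1)^j * of_nat (k choose j) * fps_nth f (k+1+j)) = 0"
    using assms(1) unfolding symplectic_def by (metis add_diff_cancel_right' le_add2)
  moreover have "(\<Sum>j=0..k. (-1)^j * of_nat (k choose j) * fps_nth f (k+1+j))
      = (-1)^k * fps_nth f (2*k+1)"
  proof -
    have "(\<Sum>j=0..k. (-1)^j * of_nat (k choose j) * fps_nth f (k+1+j))
       = (\<Sum>j\<in>{k}. (-1)^j * of_nat (k choose j) * fps_nth f (k+1+j))"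
      apply (rule sum.mono_neutral_right)
      using assms(2) unfolding in_mpow_def by auto
    then show ?thesis by (simp add: mult_2)
  qed
  ultimately have "fps_nth f (2*k+1) = 0" by simp
  then show ?thesis using assms(2) unfolding in_mpow_def
  proof (intro allI impI)
    fix i assume "fps_nth f (2*k+1) = 0" "\<forall>i<2*k+1. fps_nth f i = 0" "i < 2*k+2"
    then show "fps_nth f i = 0" by (cases "i = 2*k+1") auto
  qed
qed

fun RR :: "(nat \<Rightarrow> complex fps) \<Rightarrow> complex fps \<Rightarrow> nat \<Rightarrow> complex fps" where
  "RR phi f 0 = f - fps_const (fps_nth f 0 / fps_nth (phi 0) 0) * phi 0"
| "RR phi f (Suc k) = RR phi f k - fps_const (fps_nth (RR phi f k) (2*Suc k) / fps_nth (phi (Suc k)) (2*Suc k)) * phi (Suc k)"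

fun AA :: "(nat \<Rightarrow> complex fps) \<Rightarrow> complex fps \<Rightarrow> nat \<Rightarrow> complex" where
  "AA phi f 0 = fps_nth f 0 / fps_nth (phi 0) 0"
| "AA phi f (Suc k) = fps_nth (RR phi f k) (2*Suc k) / fps_nth (phi (Suc k)) (2*Suc k)"

lemma RR_eq: "RR phi f k = f - (\<Sum>i\<le>k. fps_const (AA phi f i) * phi i)"
  by (induction k) (simp_all add: algebra_simps)

lemma RR_props:
  assumes "symplectic_basis phi" "symplectic f"
  shows "symplectic (RR phi f k) \<and> in_mpow (RR phi f k) (2*k+2)"
proof (induction k)
  case 0
  have p: "symplectic (phi 0)" "fps_nth (phi 0) 0 \<noteq> 0" proof -
    have "symplectic (phi 0) \<and> in_mpow (phi 0) (2*0) \<and> fps_nth (phi 0) (2*0) \<noteq> 0"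
      using assms(1) unfolding symplectic_basis_def by blast
    then show "symplectic (phi 0)" "fps_nth (phi 0) 0 \<noteq> 0" by simp_all
  qed
  have s: "symplectic (RR phi f 0)" using symp_lin[OF assms(2) p(1)] by simp
  have "in_mpow (RR phi f 0) (2*0+1)" using p(2) unfolding in_mpow_def by simp
  then have "in_mpow (RR phi f 0) (2*0+2)" using symp_odd[OF s] by blast
  then show ?case using s by simp
next
  case (Suc k)
  have p: "symplectic (phi (Suc k))" "fps_nth (phi (Suc k)) (2*Suc k) \<noteq> 0"
     "in_mpow (phi (Suc k)) (2*Suc k)" using assms(1) unfolding symplectic_basis_def by blast+
  have s: "symplectic (RR phi f (Suc k))" using symp_lin[OF _ p(1)] Suc by simp
  have "in_mpow (RR phi f (Suc k)) (2*Suc k+1)" using p(2,3) Suc unfolding in_mpow_def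
    by (auto simp: less_Suc_eq)
  then have "in_mpow (RR phi f (Suc k)) (2*Suc k+2)" using symp_odd[OF s] by blast
  then show ?case using s by simp
qed

lemma in_mpow_diff: "in_mpow f n \<Longrightarrow> in_mpow g n \<Longrightarrow> in_mpow (f - g) n"
  unfolding in_mpow_def by simp

theorem lemma2p3:
  fixes phi :: "nat \<Rightarrow> complex fps" and f :: "complex fps"
  assumes "symplectic_basis phi" and "symplectic f"
  shows "(\<exists>!a :: nat \<Rightarrow> complex.
           (\<forall>k. in_mpow (f - (\<Sum>i\<le>k. fps_const (a i) * phi i)) (2*k+2))) \<and>
         (\<forall>a :: nat \<Rightarrow> complex.
           (\<forall>k. in_mpow (f - (\<Sum>i\<le>k. fps_const (a i) * phi i)) (2*k+2)) \<longrightarrow>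
           (\<lambda>k. \<Sum>i\<le>k. fps_const (a i) * phi i) \<longlonglongrightarrow> f)"
proof (intro conjI allI impI)
  show "\<exists>!a :: nat \<Rightarrow> complex. (\<forall>k. in_mpow (f - (\<Sum>i\<le>k. fps_const (a i) * phi i)) (2*k+2))"
  proof (rule ex1I)
  show "\<forall>k. in_mpow (f - (\<Sum>i\<le>k. fps_const (AA phi f i) * phi i)) (2*k+2)"
    using RR_props[OF assms] RR_eq by metis
next
  fix b assume hb: "\<forall>k. in_mpow (f - (\<Sum>i\<le>k. fps_const (b i) * phi i)) (2*k+2)"
  have ha: "\<forall>k. in_mpow (f - (\<Sum>i\<le>k. fps_const (AA phi f i) * phi i)) (2*k+2)"
    using RR_props[OF assms] RR_eq by metis
  show "b = AA phi f"
  proof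
    fix k show "b k = AA phi f k"
    proof (induction k rule: less_induct)
      case (less k)
      have D: "in_mpow ((f - (\<Sum>i\<le>k. fps_const (AA phi f i) * phi i)) - (f - (\<Sum>i\<le>k. fps_const (b i) * phi i))) (2*k+2)"
        using in_mpow_diff ha hb by blast
      have "(f - (\<Sum>i\<le>k. fps_const (AA phi f i) * phi i)) - (f - (\<Sum>i\<le>k. fps_const (b i) * phi i))
          = (\<Sum>i\<le>k. fps_const (b i) * phi i - fps_const (AA phi f i) * phi i)"
        by (simp add: sum_subtractf)
      also have "\<dots> = (\<Sum>i\<in>{k}. fps_const (b i) * phi i - fps_const (AA phi f i) * phi i)"
        by (rule sum.mono_neutral_right) (use less in auto)
      finally have "in_mpow (fps_const (b k) * phi k - fps_const (AA phi f k) * phi k) (2*k+2)"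
        using D by simp
      then have "(b k - AA phi f k) * fps_nth (phi k) (2*k) = 0"
        unfolding in_mpow_def by (auto simp: algebra_simps)
      moreover have "fps_nth (phi k) (2*k) \<noteq> 0" using assms(1) unfolding symplectic_basis_def by auto
      ultimately show ?case by simp
    qed
  qed
  qed
next
  fix a assume ha: "\<forall>k. in_mpow (f - (\<Sum>i\<le>k. fps_const (a i) * phi i)) (2*k+2)"
  show "(\<lambda>k. \<Sum>i\<le>k. fps_const (a i) * phi i) \<longlonglongrightarrow> f"
    unfolding lim_sequentially
  proof (intro allI impI)
    fix r :: real assume r: "r > 0"
    obtain N where N: "inverse (real (Suc N)) < r" using reals_Archimedean[OF r] by blast
    show "\<exists>N. \<forall>n\<ge>N. dist (\<Sum>i\<le>n. fps_const (a i) * phi i) f < r"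
    proof (intro exI allI impI)
      fix n assume n: "n \<ge> N"
      define S where "S = (\<Sum>i\<le>n. fps_const (a i) * phi i)"
      show "dist (\<Sum>i\<le>n. fps_const (a i) * phi i) f < r"
      proof (cases "S = f")
        case True then show ?thesis using r by (simp add: S_def)
      next
        case False
        have sd: "subdegree (S - f) \<ge> 2*n+2"
        proof (rule subdegree_geI)
          show "S - f \<noteq> 0" using False by simp
          fix i assume "i < 2*n+2"
          then show "fps_nth (S - f) i = 0" using ha unfolding in_mpow_def S_def
            by simp
        qed
        have "real (Suc N) \<le> 2 ^ (2*n+2)"
        proof -
          have "Suc N \<le> Suc n" using n by simp
          also have "Suc n < 2 ^ Suc n" by (rule less_exp)
          also have "(2::nat) ^ Suc n \<le> 2 ^ (2*n+2)" by (rule power_increasing) auto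
          finally show ?thesis by (metis less_imp_le of_nat_le_iff of_nat_numeral of_nat_power)
        qed
        also have "(2::real) ^ (2*n+2) \<le> 2 ^ subdegree (S - f)"
          by (rule power_increasing[OF sd]) simp
        finally have "inverse ((2::real) ^ subdegree (S - f)) \<le> inverse (real (Suc N))"
          by (intro le_imp_inverse_le) auto
        then have "inverse ((2::real) ^ subdegree (S - f)) < r" by (rule le_less_trans[OF _ N])
        moreover have "subdegree (S - f) = subdegree (f - S)" by simp
        ultimately show ?thesis using False by (simp add: dist_fps_def S_def)
      qed
    qed
  qed
qed

end
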